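(* Let $t_1,\dots,t_n$ be indeterminates and let $C$ be the $n\times n$ matrix with $C_{ii}=0$ and $C_{ij}=\frac{1}{t_i-t_j}$ for $i\ne j$. Then $$\det C=\sum_\pi\prod_{i<j,\ \pi(i)=j}\frac{1}{(t_i-t_j)^2},$$ where the sum is over all perfect matchings $\pi$ of $\{1,\dots,n\}$, i.e. fixed-point-free involutions of $\{1,\dots,n\}$ (the empty sum being $0$ when $n$ is odd). *)

theory Defs
  imports "Jordan_Normal_Form.Determinant" "HOL-Combinatorics.Permutations"
begin

definition cauchy_like_mat :: "nat \<Rightarrow> (nat \<Rightarrow> 'a::field) \<Rightarrow> 'a mat" where
  "cauchy_like_mat n t = mat n n (\<lambda>(i, j). if i = j then 0 else 1 / (t i - t j))"

definition perfect_matchings :: "nat \<Rightarrow> (nat \<Rightarrow> nat) set" where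
  "perfect_matchings n = {\<pi>. \<pi> permutes {..<n} \<and> (\<forall>i<n. \<pi> i \<noteq> i \<and> \<pi> (\<pi> i) = i)}"

end

theory Submission
  imports Defs
begin

definition Cm :: "(nat \<Rightarrow> 'a::field) \<Rightarrow> nat \<Rightarrow> nat \<Rightarrow> 'a" where
  "Cm t i j = (if i = j then 0 else 1 / (t i - t j))"

definition Dt :: "(nat \<Rightarrow> 'a::field) \<Rightarrow> nat set \<Rightarrow> 'a" where
  "Dt t S = (\<Sum>\<sigma>\<in>{\<sigma>. \<sigma> permutes S}. of_int (sign \<sigma>) * (\<Prod>i\<in>S. Cm t i (\<sigma> i)))"

lemma step_split:
  assumes fin: "finite S" and aS: "a \<in> S"
  shows "Dt t S = (\<Sum>c\<in>S. \<Sum>\<sigma>\<in>{\<sigma>. \<sigma> permutes S \<and> \<sigma> c = a}. of_int (sign \<sigma>) * (\<Prod>i\<in>S. Cm t i (\<sigma> i)))"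
proof -
  let ?w = "\<lambda>\<sigma>. of_int (sign \<sigma>) * (\<Prod>i\<in>S. Cm t i (\<sigma> i)) :: 'a"
  have "Dt t S = (\<Sum>\<sigma>\<in>{\<sigma>. \<sigma> permutes S}. \<Sum>c\<in>S. if c = inv_into UNIV \<sigma> a then ?w \<sigma> else 0)"
    unfolding Dt_def
  proof (rule sum.cong[OF refl])
    fix \<sigma> assume "\<sigma> \<in> {\<sigma>. \<sigma> permutes S}"
    then have p: "\<sigma> permutes S" by simp
    have "inv_into UNIV \<sigma> a \<in> S" using permutes_in_image[OF permutes_inv[OF p]] aS by simp
    then show "?w \<sigma> = (\<Sum>c\<in>S. if c = inv_into UNIV \<sigma> a then ?w \<sigma> else 0)"
      using fin by simp
  qed
  also have "\<dots> = (\<Sum>c\<in>S. \<Sum>\<sigma>\<in>{\<sigma>. \<sigma> permutes S}. if \<sigma> c = a then ?w \<sigma> else 0)"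
    apply (subst sum.swap)
    apply (intro sum.cong refl)
    apply (simp add: permutes_inverses)
    by (metis permutes_inverses(1) permutes_inverses(2))
  also have "\<dots> = (\<Sum>c\<in>S. \<Sum>\<sigma>\<in>{\<sigma>. \<sigma> permutes S \<and> \<sigma> c = a}. ?w \<sigma>)"
    apply (rule sum.cong[OF refl])
    apply (subst sum.inter_filter[symmetric], rule finite_permutations[OF fin])
    by (rule sum.cong) auto
  finally show ?thesis .
qed

lemma prod_sigma:
  assumes fin: "finite S" and aS: "a \<in> S" and cS: "c \<in> S" and ca: "c \<noteq> a"
    and tp: "\<tau> permutes S - {a}"
  shows "(\<Prod>i\<in>S. Cm t i ((\<tau> \<circ> transpose a c) i)) =
     Cm t a (\<tau> c) * (Cm t c a * (\<Prod>i\<in>S-{a,c}. Cm t i (\<tau> i)))"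
proof -
  have S: "S = insert a (insert c (S - {a,c}))" using aS cS by auto
  have ta: "\<tau> a = a" using permutes_not_in[OF tp] by simp
  have "(\<Prod>i\<in>S. Cm t i ((\<tau> \<circ> transpose a c) i)) =
     (\<Prod>i\<in>insert a (insert c (S - {a,c})). Cm t i ((\<tau> \<circ> transpose a c) i))"
    using S by simp
  also have "\<dots> = Cm t a (\<tau> c) * (Cm t c a * (\<Prod>i\<in>S-{a,c}. Cm t i ((\<tau> \<circ> transpose a c) i)))"
    using fin ca ta by (simp add: prod.insert)
  also have "(\<Prod>i\<in>S-{a,c}. Cm t i ((\<tau> \<circ> transpose a c) i)) = (\<Prod>i\<in>S-{a,c}. Cm t i (\<tau> i))"
    by (rule prod.cong) (auto simp: transpose_def)
  finally show ?thesis .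
qed

lemma prod_tau:
  assumes fin: "finite S" and cS: "c \<in> S" and ca: "c \<noteq> a"
  shows "(\<Prod>i\<in>S-{a}. Cm t i (\<tau> i)) = Cm t c (\<tau> c) * (\<Prod>i\<in>S-{a,c}. Cm t i (\<tau> i))"
proof -
  have S: "S - {a} = insert c (S - {a,c})" using cS ca by auto
  show ?thesis using fin by (subst S) (simp add: prod.insert)
qed

lemma aux_uv: "\<lbrakk>(u::'a::field) \<noteq> 0; v \<noteq> 0; u \<noteq> v\<rbrakk> \<Longrightarrow> 1/u * (1/(-v)) = 1/(u-v) * (1/u - 1/v)"
proof -
  assume h: "u \<noteq> 0" "v \<noteq> 0" "u \<noteq> v"
  then have "u - v \<noteq> 0" by simp
  have "1/u - 1/v = (v - u)/(u*v)" using h by (simp add: diff_frac_eq)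
  also have "v - u = -(u - v)" by simp
  finally have "1/(u-v) * (1/u - 1/v) = - 1/(u*v)" using h \<open>u - v \<noteq> 0\<close> by (simp add: field_simps)
  then show ?thesis by simp
qed

lemma aux_xyz: "\<lbrakk>(x::'a::field) \<noteq> y; x \<noteq> z; y \<noteq> z\<rbrakk> \<Longrightarrow> 1/(x-y) * (1/(z-x)) = 1/(z-y) * (1/(x-y) - 1/(x-z))"
  using aux_uv[of "x-y" "x-z"] by (simp add: algebra_simps)

lemma key_identity:
  fixes t :: "nat \<Rightarrow> 'a::field"
  assumes "t a \<noteq> t b" "t a \<noteq> t c" "t b \<noteq> t c" "a \<noteq> b" "a \<noteq> c" "b \<noteq> c"
  shows "Cm t a b * Cm t c a = Cm t c b * (Cm t a b - Cm t a c)"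
  using assms aux_xyz[of "t a" "t b" "t c"] unfolding Cm_def by simp

lemma Cm_sq: "t a \<noteq> t c \<Longrightarrow> a \<noteq> c \<Longrightarrow> - (Cm t a c * Cm t c a) = 1 / (t a - t c)^2"
proof -
  assume "t a \<noteq> t c" "a \<noteq> c"
  have e: "t c - t a = -(t a - t c)" by simp
  show ?thesis unfolding Cm_def using \<open>a \<noteq> c\<close> apply simp apply (subst e)
    by (simp only: divide_minus_right mult_minus_right minus_minus power2_eq_square)
qed

lemma sign_tr:
  assumes fin: "finite S" and aS: "a \<in> S" and cS: "c \<in> S" and ca: "c \<noteq> a"
    and tp: "\<tau> permutes S"
  shows "sign (\<tau> \<circ> transpose a c) = - sign \<tau>"
proof -
  have "permutation \<tau>" using permutes_imp_permutation[OF fin tp] .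
  moreover have "permutation (transpose a c)"
    using permutes_imp_permutation[OF fin permutes_swap_id[OF aS cS]] .
  ultimately show ?thesis using ca by (simp add: sign_compose sign_swap_id)
qed

lemma perm_fix:
  "\<tau> permutes S - {a} \<Longrightarrow> \<tau> c = c \<longleftrightarrow> \<tau> permutes S - {a, c}"
proof
  assume p: "\<tau> permutes S - {a}" and "\<tau> c = c"
  show "\<tau> permutes S - {a, c}"
    by (rule permutes_superset[OF p]) (use \<open>\<tau> c = c\<close> in auto)
next
  assume "\<tau> permutes S - {a, c}"
  then show "\<tau> c = c" using permutes_not_in by fastforce
qed

lemma step_c:
  fixes t :: "nat \<Rightarrow> 'a::field"
  assumes fin: "finite S" and aS: "a \<in> S" and cS: "c \<in> S" and ca: "c \<noteq> a"
    and inj: "inj_on t S"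
  shows "(\<Sum>\<sigma>\<in>{\<sigma>. \<sigma> permutes S \<and> \<sigma> c = a}. of_int (sign \<sigma>) * (\<Prod>i\<in>S. Cm t i (\<sigma> i))) =
    (\<Sum>\<tau>\<in>{\<tau>. \<tau> permutes S-{a}}. - (of_int (sign \<tau>) * (\<Prod>i\<in>S-{a}. Cm t i (\<tau> i))) * (Cm t a (\<tau> c) - Cm t a c))
    + 1/(t a - t c)^2 * Dt t (S-{a,c})"
proof -
  let ?tr = "transpose a c"
  have trp: "?tr permutes S" using permutes_swap_id[OF aS cS] .
  have inv: "\<sigma> \<circ> ?tr \<circ> ?tr = \<sigma>" for \<sigma> :: "nat \<Rightarrow> nat"
    by (simp add: fun_eq_iff)
  have 1: "(\<Sum>\<sigma>\<in>{\<sigma>. \<sigma> permutes S \<and> \<sigma> c = a}. of_int (sign \<sigma>) * (\<Prod>i\<in>S. Cm t i (\<sigma> i))) =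
     (\<Sum>\<tau>\<in>{\<tau>. \<tau> permutes S-{a}}. of_int (sign (\<tau> \<circ> ?tr)) * (\<Prod>i\<in>S. Cm t i ((\<tau> \<circ> ?tr) i)))"
  proof (rule sum.reindex_bij_witness[where i="\<lambda>\<tau>. \<tau> \<circ> ?tr" and j="\<lambda>\<sigma>. \<sigma> \<circ> ?tr"])
    fix \<sigma> assume "\<sigma> \<in> {\<sigma>. \<sigma> permutes S \<and> \<sigma> c = a}"
    then have p: "\<sigma> permutes S" and sc: "\<sigma> c = a" by auto
    show "\<sigma> \<circ> ?tr \<circ> ?tr = \<sigma>" by (rule inv)
    have "\<sigma> \<circ> ?tr permutes S" using permutes_compose[OF trp p] .
    then have "\<sigma> \<circ> ?tr permutes S - {a}"
      by (rule permutes_superset) (use sc in auto)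
    then show "\<sigma> \<circ> ?tr \<in> {\<tau>. \<tau> permutes S - {a}}" by simp
    show "of_int (sign (\<sigma> \<circ> ?tr \<circ> ?tr)) * (\<Prod>i\<in>S. Cm t i ((\<sigma> \<circ> ?tr \<circ> ?tr) i)) =
        of_int (sign \<sigma>) * (\<Prod>i\<in>S. Cm t i (\<sigma> i))" by (simp only: inv)
  next
    fix \<tau> assume "\<tau> \<in> {\<tau>. \<tau> permutes S - {a}}"
    then have p: "\<tau> permutes S - {a}" by simp
    show "\<tau> \<circ> ?tr \<circ> ?tr = \<tau>" by (rule inv)
    have p': "\<tau> permutes S" using permutes_subset[OF p] by blast
    have "\<tau> a = a" using permutes_not_in[OF p] by simp
    then show "\<tau> \<circ> ?tr \<in> {\<sigma>. \<sigma> permutes S \<and> \<sigma> c = a}"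
      using permutes_compose[OF trp p'] by simp
  qed
  let ?P = "\<lambda>\<tau>. of_int (sign \<tau>) * (\<Prod>i\<in>S-{a}. Cm t i (\<tau> i))"
  let ?f = "\<lambda>\<tau>. of_int (sign \<tau>) * (\<Prod>i\<in>S-{a,c}. Cm t i (\<tau> i)) * (- (Cm t a c * Cm t c a))"
  have 2: "of_int (sign (\<tau> \<circ> ?tr)) * (\<Prod>i\<in>S. Cm t i ((\<tau> \<circ> ?tr) i)) =
      - ?P \<tau> * (Cm t a (\<tau> c) - Cm t a c) + (if \<tau> c = c then ?f \<tau> else 0)"
    if "\<tau> \<in> {\<tau>. \<tau> permutes S-{a}}" for \<tau>
  proof -
    from that have p: "\<tau> permutes S - {a}" by simp
    have p': "\<tau> permutes S" using permutes_subset[OF p] by blast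
    have sg: "sign (\<tau> \<circ> ?tr) = - sign \<tau>" by (rule sign_tr[OF fin aS cS ca p'])
    have pr: "(\<Prod>i\<in>S. Cm t i ((\<tau> \<circ> ?tr) i)) = Cm t a (\<tau> c) * (Cm t c a * (\<Prod>i\<in>S-{a,c}. Cm t i (\<tau> i)))"
      by (rule prod_sigma[OF fin aS cS ca p])
    have pt: "(\<Prod>i\<in>S-{a}. Cm t i (\<tau> i)) = Cm t c (\<tau> c) * (\<Prod>i\<in>S-{a,c}. Cm t i (\<tau> i))"
      by (rule prod_tau[OF fin cS ca])
    show ?thesis
    proof (cases "\<tau> c = c")
      case True
      then show ?thesis using sg pr by (simp add: algebra_simps)
    next
      case False
      have bS: "\<tau> c \<in> S - {a}" using permutes_in_image[OF p] cS ca by simp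
      have ki: "Cm t a (\<tau> c) * Cm t c a = Cm t c (\<tau> c) * (Cm t a (\<tau> c) - Cm t a c)"
        apply (rule key_identity)
        using inj aS cS bS ca False by (auto dest: inj_onD)
      have "of_int (sign (\<tau> \<circ> ?tr)) * (\<Prod>i\<in>S. Cm t i ((\<tau> \<circ> ?tr) i)) =
          - of_int (sign \<tau>) * ((Cm t a (\<tau> c) * Cm t c a) * (\<Prod>i\<in>S-{a,c}. Cm t i (\<tau> i)))"
        using sg pr by (simp add: algebra_simps)
      also have "\<dots> = - ?P \<tau> * (Cm t a (\<tau> c) - Cm t a c)"
        unfolding ki pt by (simp add: algebra_simps)
      finally show ?thesis using False by simp
    qed
  qed
  have fT: "finite {\<tau>. \<tau> permutes S-{a}}" using finite_permutations fin by blast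
  have 3: "(\<Sum>\<tau>\<in>{\<tau>. \<tau> permutes S-{a}}. if \<tau> c = c then ?f \<tau> else 0) = (\<Sum>\<tau>\<in>{\<tau>. \<tau> permutes S-{a,c}}. ?f \<tau>)"
  proof -
    have setq: "{x \<in> {\<tau>. \<tau> permutes S - {a}}. x c = c} = {\<tau>. \<tau> permutes S - {a, c}}"
    proof (intro Set.set_eqI iffI)
      fix x assume "x \<in> {x \<in> {\<tau>. \<tau> permutes S - {a}}. x c = c}"
      then have "x permutes S - {a}" "x c = c" by simp_all
      then show "x \<in> {\<tau>. \<tau> permutes S - {a, c}}" using perm_fix[of x S a c] by simp
    next
      fix x assume "x \<in> {\<tau>. \<tau> permutes S - {a, c}}"
      then have xp: "x permutes S - {a, c}" by simp
      have "x permutes S - {a}" by (rule permutes_subset[OF xp]) blast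
      moreover have "x c = c" by (rule permutes_not_in[OF xp]) simp
      ultimately show "x \<in> {x \<in> {\<tau>. \<tau> permutes S - {a}}. x c = c}" by simp
    qed
    show ?thesis
      by (subst sum.inter_filter[symmetric, OF fT]) (simp only: setq)
  qed
  have 4: "(\<Sum>\<tau>\<in>{\<tau>. \<tau> permutes S-{a,c}}. ?f \<tau>) = 1/(t a - t c)^2 * Dt t (S-{a,c})"
  proof -
    have "t a \<noteq> t c" using inj aS cS ca by (auto dest: inj_onD)
    then have "- (Cm t a c * Cm t c a) = 1/(t a - t c)^2" using ca Cm_sq by metis
    then show ?thesis unfolding Dt_def sum_distrib_right[symmetric] by (simp only: mult.commute)
  qed
  have "(\<Sum>\<tau>\<in>{\<tau>. \<tau> permutes S-{a}}. of_int (sign (\<tau> \<circ> ?tr)) * (\<Prod>i\<in>S. Cm t i ((\<tau> \<circ> ?tr) i)))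
     = (\<Sum>\<tau>\<in>{\<tau>. \<tau> permutes S-{a}}. - ?P \<tau> * (Cm t a (\<tau> c) - Cm t a c) + (if \<tau> c = c then ?f \<tau> else 0))"
    by (rule sum.cong[OF refl 2])
  also have "\<dots> = (\<Sum>\<tau>\<in>{\<tau>. \<tau> permutes S-{a}}. - ?P \<tau> * (Cm t a (\<tau> c) - Cm t a c)) + (\<Sum>\<tau>\<in>{\<tau>. \<tau> permutes S-{a}}. if \<tau> c = c then ?f \<tau> else 0)"
    by (rule sum.distrib)
  finally show ?thesis unfolding 1 3 4 .
qed

lemma D_rec:
  fixes t :: "nat \<Rightarrow> 'a::field"
  assumes fin: "finite S" and aS: "a \<in> S" and inj: "inj_on t S"
  shows "Dt t S = (\<Sum>c\<in>S-{a}. 1/(t a - t c)^2 * Dt t (S-{a,c}))"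
proof -
  let ?w = "\<lambda>\<sigma>. of_int (sign \<sigma>) * (\<Prod>i\<in>S. Cm t i (\<sigma> i)) :: 'a"
  let ?X = "\<lambda>\<tau> c. - (of_int (sign \<tau>) * (\<Prod>i\<in>S-{a}. Cm t i (\<tau> i))) * (Cm t a (\<tau> c) - Cm t a c)"
  have z: "(\<Sum>\<sigma>\<in>{\<sigma>. \<sigma> permutes S \<and> \<sigma> a = a}. ?w \<sigma>) = 0"
  proof (rule sum.neutral, rule ballI)
    fix \<sigma> assume "\<sigma> \<in> {\<sigma>. \<sigma> permutes S \<and> \<sigma> a = a}"
    then have "\<sigma> a = a" by simp
    then have "(\<Prod>i\<in>S. Cm t i (\<sigma> i)) = 0"
      using fin aS by (subst prod.remove[of S a]) (simp_all add: Cm_def)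
    then show "?w \<sigma> = 0" by simp
  qed
  have "Dt t S = (\<Sum>c\<in>S. \<Sum>\<sigma>\<in>{\<sigma>. \<sigma> permutes S \<and> \<sigma> c = a}. ?w \<sigma>)"
    by (rule step_split[OF fin aS])
  also have "\<dots> = (\<Sum>c\<in>S-{a}. \<Sum>\<sigma>\<in>{\<sigma>. \<sigma> permutes S \<and> \<sigma> c = a}. ?w \<sigma>)"
    using fin aS z by (simp add: sum.remove)
  also have "\<dots> = (\<Sum>c\<in>S-{a}. (\<Sum>\<tau>\<in>{\<tau>. \<tau> permutes S-{a}}. ?X \<tau> c) + 1/(t a - t c)^2 * Dt t (S-{a,c}))"
    by (rule sum.cong[OF refl], rule step_c[OF fin aS _ _ inj]) auto
  also have "\<dots> = (\<Sum>c\<in>S-{a}. \<Sum>\<tau>\<in>{\<tau>. \<tau> permutes S-{a}}. ?X \<tau> c) + (\<Sum>c\<in>S-{a}. 1/(t a - t c)^2 * Dt t (S-{a,c}))"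
    by (rule sum.distrib)
  also have "(\<Sum>c\<in>S-{a}. \<Sum>\<tau>\<in>{\<tau>. \<tau> permutes S-{a}}. ?X \<tau> c) = 0"
  proof -
    have "(\<Sum>c\<in>S-{a}. \<Sum>\<tau>\<in>{\<tau>. \<tau> permutes S-{a}}. ?X \<tau> c) = (\<Sum>\<tau>\<in>{\<tau>. \<tau> permutes S-{a}}. \<Sum>c\<in>S-{a}. ?X \<tau> c)"
      by (rule sum.swap)
    also have "\<dots> = 0"
    proof (rule sum.neutral, rule ballI)
      fix \<tau> assume "\<tau> \<in> {\<tau>. \<tau> permutes S-{a}}"
      then have p: "\<tau> permutes S - {a}" by simp
      have "(\<Sum>c\<in>S-{a}. Cm t a (\<tau> c)) = (\<Sum>c\<in>S-{a}. Cm t a c)"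
        by (rule sum.reindex_bij_betw[OF permutes_imp_bij[OF p]])
      then have "(\<Sum>c\<in>S-{a}. Cm t a (\<tau> c) - Cm t a c) = 0"
        by (simp add: sum_subtractf)
      then show "(\<Sum>c\<in>S-{a}. ?X \<tau> c) = 0"
        by (simp add: sum_negf sum_distrib_left[symmetric])
    qed
    finally show ?thesis .
  qed
  finally show ?thesis by simp
qed

definition PMs :: "nat set \<Rightarrow> (nat \<Rightarrow> nat) set" where
  "PMs S = {\<pi>. \<pi> permutes S \<and> (\<forall>i\<in>S. \<pi> i \<noteq> i \<and> \<pi> (\<pi> i) = i)}"

definition prs :: "nat set \<Rightarrow> (nat \<Rightarrow> nat) \<Rightarrow> (nat \<times> nat) set" where
  "prs S \<pi> = {(i, j). i < j \<and> i \<in> S \<and> j \<in> S \<and> \<pi> i = j}"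

definition Wt :: "(nat \<Rightarrow> 'a::field) \<Rightarrow> nat set \<Rightarrow> (nat \<Rightarrow> nat) \<Rightarrow> 'a" where
  "Wt t S \<pi> = (\<Prod>(i, j)\<in>prs S \<pi>. 1 / (t i - t j)^2)"

definition Mt :: "(nat \<Rightarrow> 'a::field) \<Rightarrow> nat set \<Rightarrow> 'a" where
  "Mt t S = (\<Sum>\<pi>\<in>PMs S. Wt t S \<pi>)"

lemma finite_PMs: "finite S \<Longrightarrow> finite (PMs S)"
  unfolding PMs_def by (rule finite_subset[OF _ finite_permutations]) auto

lemma prs_insert:
  assumes aS: "a \<in> S" and cS: "c \<in> S" and ca: "c \<noteq> a" and p: "\<rho> permutes S - {a, c}"
  shows "prs S (transpose a c \<circ> \<rho>) = insert (min a c, max a c) (prs (S - {a,c}) \<rho>)"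
proof -
  have ra: "\<rho> a = a" and rc: "\<rho> c = c" using permutes_not_in[OF p] by auto
  have ri: "\<rho> i \<in> S - {a,c}" if "i \<in> S - {a,c}" for i using permutes_in_image[OF p] that by simp
  show ?thesis
  proof (intro Set.set_eqI iffI)
    fix x assume "x \<in> prs S (transpose a c \<circ> \<rho>)"
    then obtain i j where x: "x = (i, j)" "i < j" "i \<in> S" "j \<in> S" "transpose a c (\<rho> i) = j"
      unfolding prs_def by auto
    show "x \<in> insert (min a c, max a c) (prs (S - {a,c}) \<rho>)"
    proof (cases "i \<in> {a, c}")
      case True
      then show ?thesis using x ra rc ca by (auto simp: transpose_def min_def max_def)
    next
      case False
      then have "i \<in> S - {a,c}" using x by simp
      from ri[OF this] have "j = \<rho> i" "\<rho> i \<in> S - {a,c}" using x by (auto simp: transpose_def)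
      then show ?thesis using x False unfolding prs_def by auto
    qed
  next
    fix x assume "x \<in> insert (min a c, max a c) (prs (S - {a,c}) \<rho>)"
    then show "x \<in> prs S (transpose a c \<circ> \<rho>)"
      using ra rc ca aS cS unfolding prs_def
      by (auto simp: transpose_def min_def max_def)
  qed
qed

lemma prs_finite: "finite S \<Longrightarrow> finite (prs S \<pi>)"
  unfolding prs_def by (rule finite_subset[of _ "S \<times> S"]) auto

lemma W_insert:
  assumes fin: "finite S" and aS: "a \<in> S" and cS: "c \<in> S" and ca: "c \<noteq> a" and p: "\<rho> permutes S - {a, c}"
  shows "Wt t S (transpose a c \<circ> \<rho>) = 1/(t a - t c)^2 * Wt t (S - {a,c}) \<rho>"
proof -
  have nin: "(min a c, max a c) \<notin> prs (S - {a,c}) \<rho>" unfolding prs_def by (auto simp: min_def max_def)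
  have e: "1 / (t (min a c) - t (max a c))^2 = 1/(t a - t c)^2"
    by (cases "a \<le> c") (simp_all add: min_def max_def power2_commute)
  show ?thesis unfolding Wt_def prs_insert[OF aS cS ca p]
    using prs_finite[of "S - {a,c}" \<rho>] fin nin e by (simp add: prod.insert)
qed

lemma PMs_to:
  assumes aS: "a \<in> S" and cS: "c \<in> S" and ca: "c \<noteq> a" and r: "\<rho> \<in> PMs (S - {a,c})"
  shows "transpose a c \<circ> \<rho> \<in> PMs S" "(transpose a c \<circ> \<rho>) a = c"
proof -
  have p: "\<rho> permutes S - {a,c}" and inv: "\<forall>i\<in>S-{a,c}. \<rho> i \<noteq> i \<and> \<rho> (\<rho> i) = i"
    using r unfolding PMs_def by auto
  have ra: "\<rho> a = a" and rc: "\<rho> c = c" using permutes_not_in[OF p] by auto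
  have ri: "\<rho> i \<in> S - {a,c}" if "i \<in> S - {a,c}" for i using permutes_in_image[OF p] that by simp
  have p': "\<rho> permutes S" by (rule permutes_subset[OF p]) blast
  have "transpose a c \<circ> \<rho> permutes S" by (rule permutes_compose[OF p' permutes_swap_id[OF aS cS]])
  moreover have "\<forall>i\<in>S. (transpose a c \<circ> \<rho>) i \<noteq> i \<and> (transpose a c \<circ> \<rho>) ((transpose a c \<circ> \<rho>) i) = i"
  proof
    fix i assume iS: "i \<in> S"
    show "(transpose a c \<circ> \<rho>) i \<noteq> i \<and> (transpose a c \<circ> \<rho>) ((transpose a c \<circ> \<rho>) i) = i"
    proof (cases "i \<in> {a,c}")
      case True then show ?thesis using ra rc ca by (auto simp: transpose_def)
    next
      case False
      then have i2: "i \<in> S - {a,c}" using iS by simp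
      then have "\<rho> i \<in> S - {a,c}" using ri by blast
      then show ?thesis using inv i2 by (auto simp: transpose_def)
    qed
  qed
  ultimately show "transpose a c \<circ> \<rho> \<in> PMs S" unfolding PMs_def by simp
  show "(transpose a c \<circ> \<rho>) a = c" using ra by simp
qed

lemma PMs_from:
  assumes aS: "a \<in> S" and cS: "c \<in> S" and ca: "c \<noteq> a" and r: "\<pi> \<in> PMs S" and pa: "\<pi> a = c"
  shows "transpose a c \<circ> \<pi> \<in> PMs (S - {a,c})"
proof -
  have p: "\<pi> permutes S" and inv: "\<forall>i\<in>S. \<pi> i \<noteq> i \<and> \<pi> (\<pi> i) = i"
    using r unfolding PMs_def by auto
  have pc: "\<pi> c = a" using inv aS pa by force
  have pi: "\<pi> i \<notin> {a,c}" if "i \<in> S - {a,c}" for i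
  proof
    assume "\<pi> i \<in> {a,c}"
    moreover have "\<pi> (\<pi> i) = i" using inv that by blast
    ultimately show False using pa pc that by auto
  qed
  have "transpose a c \<circ> \<pi> permutes S" by (rule permutes_compose[OF p permutes_swap_id[OF aS cS]])
  then have "transpose a c \<circ> \<pi> permutes S - {a,c}"
    by (rule permutes_superset) (use pa pc in auto)
  moreover have "\<forall>i\<in>S-{a,c}. (transpose a c \<circ> \<pi>) i \<noteq> i \<and> (transpose a c \<circ> \<pi>) ((transpose a c \<circ> \<pi>) i) = i"
  proof
    fix i assume i2: "i \<in> S - {a,c}"
    have "\<pi> i \<in> S - {a,c}" using pi[OF i2] permutes_in_image[OF p] i2 by auto
    then have "\<pi> (\<pi> i) = i" "\<pi> i \<noteq> i" "\<pi> i \<notin> {a,c}" using inv i2 pi[OF i2] by auto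
    then show "(transpose a c \<circ> \<pi>) i \<noteq> i \<and> (transpose a c \<circ> \<pi>) ((transpose a c \<circ> \<pi>) i) = i"
      using i2 by (auto simp: transpose_def)
  qed
  ultimately show ?thesis unfolding PMs_def by simp
qed

lemma M_rec:
  fixes t :: "nat \<Rightarrow> 'a::field"
  assumes fin: "finite S" and aS: "a \<in> S"
  shows "Mt t S = (\<Sum>c\<in>S-{a}. 1/(t a - t c)^2 * Mt t (S-{a,c}))"
proof -
  have fP: "finite (PMs S)" using finite_PMs[OF fin] .
  have "Mt t S = (\<Sum>\<pi>\<in>PMs S. \<Sum>c\<in>S-{a}. if \<pi> a = c then Wt t S \<pi> else 0)"
    unfolding Mt_def
  proof (rule sum.cong[OF refl])
    fix \<pi> assume "\<pi> \<in> PMs S"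
    then have "\<pi> a \<in> S - {a}" unfolding PMs_def using permutes_in_image aS by fastforce
    then show "Wt t S \<pi> = (\<Sum>c\<in>S-{a}. if \<pi> a = c then Wt t S \<pi> else 0)"
      using fin by simp
  qed
  also have "\<dots> = (\<Sum>c\<in>S-{a}. \<Sum>\<pi>\<in>PMs S. if \<pi> a = c then Wt t S \<pi> else 0)"
    by (rule sum.swap)
  also have "\<dots> = (\<Sum>c\<in>S-{a}. \<Sum>\<pi>\<in>{\<pi>\<in>PMs S. \<pi> a = c}. Wt t S \<pi>)"
    by (rule sum.cong[OF refl], rule sum.inter_filter[symmetric, OF fP])
  also have "\<dots> = (\<Sum>c\<in>S-{a}. 1/(t a - t c)^2 * Mt t (S-{a,c}))"
  proof (rule sum.cong[OF refl])
    fix c assume c: "c \<in> S - {a}"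
    then have cS: "c \<in> S" and ca: "c \<noteq> a" by auto
    let ?tr = "transpose a c"
    have inv: "?tr \<circ> (?tr \<circ> \<sigma>) = \<sigma>" for \<sigma> :: "nat \<Rightarrow> nat"
      by (simp add: fun_eq_iff)
    have "(\<Sum>\<pi>\<in>{\<pi>\<in>PMs S. \<pi> a = c}. Wt t S \<pi>) = (\<Sum>\<rho>\<in>PMs (S-{a,c}). Wt t S (?tr \<circ> \<rho>))"
    proof (rule sum.reindex_bij_witness[where i="\<lambda>\<rho>. ?tr \<circ> \<rho>" and j="\<lambda>\<pi>. ?tr \<circ> \<pi>"])
      fix \<pi> assume "\<pi> \<in> {\<pi>\<in>PMs S. \<pi> a = c}"
      then show "?tr \<circ> (?tr \<circ> \<pi>) = \<pi>" "?tr \<circ> \<pi> \<in> PMs (S - {a,c})"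
          "Wt t S (?tr \<circ> (?tr \<circ> \<pi>)) = Wt t S \<pi>"
        using PMs_from[OF aS cS ca] inv by auto
    next
      fix \<rho> assume "\<rho> \<in> PMs (S - {a,c})"
      then show "?tr \<circ> (?tr \<circ> \<rho>) = \<rho>" "?tr \<circ> \<rho> \<in> {\<pi>\<in>PMs S. \<pi> a = c}"
        using PMs_to[OF aS cS ca] inv by auto
    qed
    also have "\<dots> = (\<Sum>\<rho>\<in>PMs (S-{a,c}). 1/(t a - t c)^2 * Wt t (S-{a,c}) \<rho>)"
      by (rule sum.cong[OF refl], rule W_insert[OF fin aS cS ca]) (simp add: PMs_def)
    also have "\<dots> = 1/(t a - t c)^2 * Mt t (S-{a,c})"
      unfolding Mt_def by (simp add: sum_distrib_left)
    finally show "(\<Sum>\<pi>\<in>{\<pi>\<in>PMs S. \<pi> a = c}. Wt t S \<pi>) = 1/(t a - t c)^2 * Mt t (S-{a,c})" .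
  qed
  finally show ?thesis .
qed

lemma D_eq_M:
  fixes t :: "nat \<Rightarrow> 'a::field"
  shows "finite S \<Longrightarrow> inj_on t S \<Longrightarrow> Dt t S = Mt t S"
proof (induction "card S" arbitrary: S rule: less_induct)
  case less
  show ?case
  proof (cases "S = {}")
    case True
    have "PMs {} = {id}" unfolding PMs_def by auto
    moreover have "prs {} id = {}" unfolding prs_def by auto
    ultimately show ?thesis using True unfolding Dt_def Mt_def Wt_def by simp
  next
    case False
    then obtain a where aS: "a \<in> S" by blast
    have "Dt t S = (\<Sum>c\<in>S-{a}. 1/(t a - t c)^2 * Dt t (S-{a,c}))"
      by (rule D_rec[OF less.prems(1) aS less.prems(2)])
    also have "\<dots> = (\<Sum>c\<in>S-{a}. 1/(t a - t c)^2 * Mt t (S-{a,c}))"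
    proof (rule sum.cong[OF refl])
      fix c assume "c \<in> S - {a}"
      have "card (S - {a,c}) < card S"
        using aS less.prems(1) by (intro psubset_card_mono) auto
      moreover have "finite (S - {a,c})" using less.prems(1) by simp
      moreover have "inj_on t (S - {a,c})" using less.prems(2) by (rule inj_on_subset) auto
      ultimately show "1/(t a - t c)^2 * Dt t (S-{a,c}) = 1/(t a - t c)^2 * Mt t (S-{a,c})"
        using less.hyps by simp
    qed
    also have "\<dots> = Mt t S" by (rule M_rec[OF less.prems(1) aS, symmetric])
    finally show ?thesis .
  qed
qed

theorem mainTheorem19:
  fixes t :: "nat \<Rightarrow> 'a::field" and n :: nat
  assumes "inj_on t {..<n}"
  shows "det (cauchy_like_mat n t) =
    (\<Sum>\<pi>\<in>perfect_matchings n. \<Prod>(i, j)\<in>{(i, j). i < j \<and> j < n \<and> \<pi> i = j}. 1 / (t i - t j)^2)"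
proof -
  have car: "cauchy_like_mat n t \<in> carrier_mat n n" unfolding cauchy_like_mat_def by simp
  have "det (cauchy_like_mat n t) = Dt t {..<n}"
    unfolding det_def'[OF car] Dt_def atLeast0LessThan
  proof (rule sum.cong[OF refl])
    fix p assume "p \<in> {p. p permutes {..<n}}"
    then have p: "p permutes {..<n}" by simp
    show "of_int (sign p) * (\<Prod>i\<in>{..<n}. cauchy_like_mat n t $$ (i, p i)) =
        of_int (sign p) * (\<Prod>i\<in>{..<n}. Cm t i (p i))"
      by (rule arg_cong[where f="\<lambda>x. _ * x"], rule prod.cong[OF refl])
        (use permutes_in_image[OF p] in \<open>auto simp: cauchy_like_mat_def Cm_def\<close>)
  qed
  also have "\<dots> = Mt t {..<n}" by (rule D_eq_M[OF _ assms]) simp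
  also have "\<dots> = (\<Sum>\<pi>\<in>perfect_matchings n. \<Prod>(i, j)\<in>{(i, j). i < j \<and> j < n \<and> \<pi> i = j}. 1 / (t i - t j)^2)"
  proof -
    have "PMs {..<n} = perfect_matchings n" unfolding PMs_def perfect_matchings_def by auto
    moreover have "prs {..<n} \<pi> = {(i, j). i < j \<and> j < n \<and> \<pi> i = j}" for \<pi>
      unfolding prs_def by auto
    ultimately show ?thesis unfolding Mt_def Wt_def by simp
  qed
  finally show ?thesis .
qed

end
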